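(* For every constant $c>0$ there is a constant $A_c>0$ such that for every $n\ge 2$, every straight-line drawing of the complete graph $K_n$ in the hyperbolic plane with vertex-vertex resolution at least $c$ has angular resolution at most $A_c/n^2$.
   Context: The hyperbolic plane is the complete simply connected Riemannian surface of constant curvature $-1$. A straight-line drawing of a graph in the hyperbolic plane places the vertices at distinct points and draws each edge as the hyperbolic geodesic segment between its endpoints (crossings are allowed). The vertex-vertex resolution is the minimum hyperbolic distance between two distinct vertices; the angular resolution is the minimum angle formed at a vertex between two edges incident to that vertex. *)

theory Defs
  imports "HOL-Analysis.Analysis"
begin

text \<open>Hyperboloid model of the hyperbolic plane in R^3 with the Minkowski form
  <x,y> = - x1 y1 + x2 y2 + x3 y3 (coordinate 1 is the time-like one).\<close>

definition mink :: "real^3 \<Rightarrow> real^3 \<Rightarrow> real" where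
  "mink x y = - (x$1 * y$1) + x$2 * y$2 + x$3 * y$3"

definition hyp_plane :: "(real^3) set" where
  "hyp_plane = {x. mink x x = -1 \<and> x$1 > 0}"

definition hdist :: "real^3 \<Rightarrow> real^3 \<Rightarrow> real" where
  "hdist x y = arcosh (- mink x y)"

text \<open>Initial tangent vector at p of the geodesic from p towards q
  (Minkowski-orthogonal projection of q onto the tangent plane at p).\<close>
definition htangent :: "real^3 \<Rightarrow> real^3 \<Rightarrow> real^3" where
  "htangent p q = q + mink p q *\<^sub>R p"

definition hangle :: "real^3 \<Rightarrow> real^3 \<Rightarrow> real^3 \<Rightarrow> real" where
  "hangle p q r =
     (let u = htangent p q; v = htangent p r
      in arccos (mink u v / sqrt (mink u u * mink v v)))"

definition hdrawing :: "nat \<Rightarrow> (nat \<Rightarrow> real^3) \<Rightarrow> bool" where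
  "hdrawing n P \<longleftrightarrow> (\<forall>i<n. P i \<in> hyp_plane) \<and> inj_on P {..<n}"

text \<open>If no vertex has two incident edges (n = 2)
  we use the convention that the angular resolution is 2 pi.\<close>
definition ang_res_Kn :: "nat \<Rightarrow> (nat \<Rightarrow> real^3) \<Rightarrow> real" where
  "ang_res_Kn n P =
     (let S = {hangle (P v) (P u) (P w) | v u w.
                 v < n \<and> u < n \<and> w < n \<and> u \<noteq> v \<and> w \<noteq> v \<and> u \<noteq> w}
      in if S = {} then 2 * pi else Min S)"

definition vv_res_Kn :: "nat \<Rightarrow> (nat \<Rightarrow> real^3) \<Rightarrow> real" where
  "vv_res_Kn n P = Min {hdist (P i) (P j) | i j. i < n \<and> j < n \<and> i \<noteq> j}"

end

theory Submission
  imports Defs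
begin

definition hY :: "real^3 \<Rightarrow> real" where "hY u = 1 / (u$1 - u$2)"
definition hX :: "real^3 \<Rightarrow> real" where "hX u = u$3 / (u$1 - u$2)"
definition FF :: "real \<Rightarrow> real \<Rightarrow> real \<Rightarrow> real \<Rightarrow> real" where
  "FF x1 y1 x2 y2 = 1 + ((x1 - x2)^2 + (y1 - y2)^2) / (2 * y1 * y2)"

lemma hp_pos: assumes "u \<in> hyp_plane" shows "u$1 - u$2 > 0"
proof -
  have h: "- (u$1 * u$1) + u$2 * u$2 + u$3 * u$3 = -1" "u$1 > 0"
    using assms by (auto simp: hyp_plane_def mink_def)
  have "(u$1 - u$2) * (u$1 + u$2) = 1 + (u$3)^2" using h(1) by (simp add: algebra_simps power2_eq_square)
  hence "(u$1 - u$2) * (u$1 + u$2) > 0" by (smt (verit) zero_le_power2)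
  with h(2) show ?thesis by (smt (verit) mult_nonpos_nonneg mult_nonneg_nonpos)
qed

lemma chart: assumes "u \<in> hyp_plane" "w \<in> hyp_plane"
  shows "- mink u w = FF (hX u) (hY u) (hX w) (hY w)"
proof -
  have a: "u$1 - u$2 > 0" "w$1 - w$2 > 0" using hp_pos assms by auto
  have h: "- (u$1 * u$1) + u$2 * u$2 + u$3 * u$3 = -1" "- (w$1 * w$1) + w$2 * w$2 + w$3 * w$3 = -1"
    using assms by (auto simp: hyp_plane_def mink_def)
  define a1 where "a1 = u$1 - u$2"
  define b1 where "b1 = w$1 - w$2"
  have "2 * a1 * b1 * (- mink u w) = a1^2 * (1 + (w$3)^2) + b1^2 * (1 + (u$3)^2) - 2 * a1 * b1 * u$3 * w$3"
    unfolding a1_def b1_def mink_def using h by algebra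
  moreover have "2 * a1 * b1 * FF (hX u) (hY u) (hX w) (hY w) = a1^2 * (1 + (w$3)^2) + b1^2 * (1 + (u$3)^2) - 2 * a1 * b1 * u$3 * w$3"
    unfolding FF_def hX_def hY_def a1_def[symmetric] b1_def[symmetric] using a
    unfolding a1_def[symmetric] b1_def[symmetric]
    by (simp add: field_simps power2_eq_square)
  ultimately show ?thesis using a unfolding a1_def b1_def
    by (metis mult_cancel_left mult_eq_0_iff zero_neq_numeral less_irrefl)
qed

definition Qf :: "real \<Rightarrow> real \<Rightarrow> real" where "Qf x y = (x^2 + y^2 - 1) / (2*y)"
definition Rf :: "real \<Rightarrow> real \<Rightarrow> real" where "Rf x y = x / y"

lemma FF_norm: assumes "y0 > 0" "y1 > 0" "y2 > 0"
  shows "FF x1 y1 x2 y2 = FF ((x1-x0)/y0) (y1/y0) ((x2-x0)/y0) (y2/y0)"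
  using assms unfolding FF_def by (simp add: field_simps power2_eq_square)

lemma FF_ge1: assumes "y1 > 0" "y2 > 0" shows "FF x1 y1 x2 y2 \<ge> 1"
  using assms unfolding FF_def by simp

lemma mink_sym: "mink u w = mink w u" unfolding mink_def by simp

lemma tangent_prod: assumes "mink v v = -1"
  shows "mink (htangent v u) (htangent v w) = mink u w + mink v u * mink v w"
  using assms unfolding htangent_def mink_def by simp algebra

lemma QR_id: assumes "Y > 0" "Y' > 0"
  shows "- FF X Y X' Y' + FF 0 1 X Y * FF 0 1 X' Y' = Qf X Y * Qf X' Y' + Rf X Y * Rf X' Y'"
  using assms unfolding FF_def Qf_def Rf_def by (simp add: field_simps power2_eq_square)

lemma sin_half_lb: assumes "0 \<le> (x::real)" "x \<le> 2" shows "sin x \<ge> x / 3"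
proof -
  have "\<bar>sin x - (\<Sum>m<3. sin_coeff m * x ^ m)\<bar> \<le> inverse (fact 3) * \<bar>x\<bar> ^ 3"
    by (rule Maclaurin_sin_bound)
  moreover have "(\<Sum>m<3. sin_coeff m * x ^ m) = x"
    by (simp add: sin_coeff_def eval_nat_numeral)
  ultimately have "\<bar>sin x - x\<bar> \<le> x^3/6" using assms by (simp add: eval_nat_numeral)
  hence "sin x \<ge> x - x^3/6" using abs_ge_minus_self[of "sin x - x"] by linarith
  moreover have "x^3/6 \<le> 2*x/3"
  proof -
    have "x*x \<le> 2*2" using assms by (intro mult_mono) auto
    hence "x * (x*x) \<le> x * 4" using assms by (simp add: mult_left_mono)
    thus ?thesis by (simp add: power3_eq_cube)
  qed
  ultimately show ?thesis by linarith
qed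

lemma arccos_small: assumes "-1 \<le> t" "t \<le> 1" "1 - t \<le> d^2" "0 \<le> d"
  shows "arccos t \<le> 5 * d"
proof -
  define th where "th = arccos t"
  have th: "0 \<le> th" "th \<le> pi" "cos th = t" using assms th_def
    by (auto simp: arccos_lbound arccos_ubound cos_arccos)
  have c: "cos th = 1 - 2 * sin (th/2) ^ 2" using cos_double_sin[of "th/2"] by simp
  have "th/2 \<le> 2" using th pi_less_4 by linarith
  hence s: "sin (th/2) \<ge> th/6" using sin_half_lb[of "th/2"] th by simp
  have "(th/6)^2 \<le> sin (th/2) ^ 2" using s th by (intro power_mono) auto
  hence "1 - t \<ge> 2 * (th/6)^2" using c th by linarith
  hence "th^2 \<le> 18 * d^2" using assms(3) by (simp add: power2_eq_square)
  also have "\<dots> \<le> (5*d)^2" by (simp add: power2_eq_square)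
  finally have sq: "th^2 \<le> (5*d)^2" .
  have "th \<le> 5 * d" using power2_le_imp_le[OF sq] assms(4) by simp
  thus ?thesis by (simp add: th_def)
qed

lemma arg_range: fixes a b c d :: real
  shows "\<bar>(a*b + c*d) / sqrt ((a^2 + c^2) * (b^2 + d^2))\<bar> \<le> 1"
proof -
  have e: "(a^2 + c^2) * (b^2 + d^2) - (a*b+c*d)^2 = (a*d - c*b)^2"
    by (simp add: algebra_simps power2_eq_square)
  have "(a*b+c*d)^2 \<le> (a^2 + c^2) * (b^2 + d^2)" using e zero_le_power2[of "a*d - c*b"] by linarith
  hence "sqrt ((a*b+c*d)^2) \<le> sqrt ((a^2 + c^2) * (b^2 + d^2))" by (rule real_sqrt_le_mono)
  hence le: "\<bar>a*b+c*d\<bar> \<le> sqrt ((a^2 + c^2) * (b^2 + d^2))" by simp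
  define sq where "sq = sqrt ((a^2 + c^2) * (b^2 + d^2))"
  have le': "\<bar>a*b+c*d\<bar> \<le> sq" using le unfolding sq_def .
  have "sq \<ge> 0" unfolding sq_def by simp
  have "\<bar>(a*b + c*d) / sq\<bar> \<le> 1"
  proof (cases "sq = 0")
    case True show ?thesis unfolding True by simp
  next
    case False
    hence sp: "sq > 0" using \<open>sq \<ge> 0\<close> by simp
    have "\<bar>(a*b + c*d) / sq\<bar> = \<bar>a*b + c*d\<bar> / sq" using sp by (simp add: abs_divide)
    also have "\<dots> \<le> 1" using le' sp by (simp add: divide_le_eq_1)
    finally show ?thesis .
  qed
  thus ?thesis unfolding sq_def .
qed

lemma angle_bound:
  fixes Q1 R1 Q2 R2 :: real
  assumes "Q1 > 0" "Q2 > 0"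
    and "(R1 / sqrt (Q1^2 + R1^2))^2 \<le> 1/2" "(R2 / sqrt (Q2^2 + R2^2))^2 \<le> 1/2"
  shows "arccos ((Q1 * Q2 + R1 * R2) / sqrt ((Q1^2 + R1^2) * (Q2^2 + R2^2)))
           \<le> 5 * \<bar>R1 / sqrt (Q1^2 + R1^2) - R2 / sqrt (Q2^2 + R2^2)\<bar>"
proof -
  define N1 where "N1 = sqrt (Q1^2 + R1^2)"
  define N2 where "N2 = sqrt (Q2^2 + R2^2)"
  have pos: "Q1^2 + R1^2 > 0" "Q2^2 + R2^2 > 0" using assms
    by (auto intro!: add_pos_nonneg)
  have N: "N1 > 0" "N2 > 0" using pos unfolding N1_def N2_def by auto
  define c1 where "c1 = Q1/N1"
  define c2 where "c2 = Q2/N2"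
  define s1 where "s1 = R1/N1"
  define s2 where "s2 = R2/N2"
  have n1: "N1^2 = Q1^2 + R1^2" unfolding N1_def using pos by simp
  have n2: "N2^2 = Q2^2 + R2^2" unfolding N2_def using pos by simp
  have "c1^2 + s1^2 = (Q1^2 + R1^2) / N1^2" unfolding c1_def s1_def by (simp add: power_divide add_divide_distrib)
  hence cs1: "c1^2 + s1^2 = 1" using n1 pos by (simp del: sum_power2_eq_zero_iff)
  have "c2^2 + s2^2 = (Q2^2 + R2^2) / N2^2" unfolding c2_def s2_def by (simp add: power_divide add_divide_distrib)
  hence cs2: "c2^2 + s2^2 = 1" using n2 pos by (simp del: sum_power2_eq_zero_iff)
  have cp: "c1 > 0" "c2 > 0" using N assms unfolding c1_def c2_def by auto
  have ss: "s1^2 \<le> 1/2" "s2^2 \<le> 1/2" using assms unfolding s1_def s2_def N1_def N2_def by auto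
  have arg: "(Q1 * Q2 + R1 * R2) / sqrt ((Q1^2 + R1^2) * (Q2^2 + R2^2)) = c1*c2 + s1 * s2"
    unfolding c1_def c2_def s1_def s2_def N1_def N2_def
    by (simp add: real_sqrt_mult add_divide_distrib)
  have "s1^2 \<le> c1^2" "s2^2 \<le> c2^2" using cs1 cs2 ss by linarith+
  hence "\<bar>s1\<bar> \<le> \<bar>c1\<bar>" "\<bar>s2\<bar> \<le> \<bar>c2\<bar>" by (simp_all add: abs_le_square_iff)
  hence ge1: "\<bar>s1\<bar> \<le> c1" "\<bar>s2\<bar> \<le> c2" using cp by auto
  have "(c1 - c2) * (c1 + c2) = (s2 - s1) * (s2 + s1)" using cs1 cs2 by (simp add: algebra_simps power2_eq_square)
  hence "\<bar>c1 - c2\<bar> * (c1 + c2) = \<bar>s2 - s1\<bar> * \<bar>s2 + s1\<bar>" using cp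
    by (metis abs_mult abs_of_pos add_pos_pos)
  also have "\<dots> \<le> \<bar>s2 - s1\<bar> * (c1 + c2)" using ge1 by (intro mult_left_mono) auto
  finally have "\<bar>c1 - c2\<bar> * (c1 + c2) \<le> \<bar>s1 - s2\<bar> * (c1 + c2)" by (simp add: abs_minus_commute)
  hence cc: "\<bar>c1 - c2\<bar> \<le> \<bar>s1 - s2\<bar>" using cp by (simp add: mult_le_cancel_right)
  have "(c1 - c2)^2 \<le> (s1 - s2)^2" using cc by (simp add: abs_le_square_iff)
  moreover have "1 - (c1*c2 + s1 * s2) = ((c1 - c2)^2 + (s1 - s2)^2) / 2" using cs1 cs2
    by (simp add: algebra_simps power2_eq_square)
  ultimately have key: "1 - (c1*c2 + s1 * s2) \<le> \<bar>s1 - s2\<bar>^2" by simp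
  have rng: "\<bar>c1*c2 + s1 * s2\<bar> \<le> 1" using arg_range[of Q1 Q2 R1 R2] arg by simp
  have "arccos (c1*c2 + s1 * s2) \<le> 5 * \<bar>s1 - s2\<bar>"
    using arccos_small[of "c1*c2 + s1 * s2" "\<bar>s1 - s2\<bar>"] key rng by auto
  thus ?thesis unfolding arg unfolding s1_def s2_def N1_def N2_def .
qed

lemma pigeon1:
  fixes f :: "'a \<Rightarrow> real"
  assumes fin: "finite S" and ab: "a \<le> b" and rng: "\<forall>i\<in>S. a \<le> f i \<and> f i \<le> b"
    and sep: "\<forall>i\<in>S. \<forall>j\<in>S. i \<noteq> j \<longrightarrow> d \<le> \<bar>f i - f j\<bar>" and d: "d > 0"
  shows "real (card S) \<le> (b - a) / d + 1"
proof (cases "S = {}")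
  case True
  have "0 \<le> (b - a) / d" using ab d by simp
  hence "0 \<le> (b - a) / d + 1" by linarith
  thus ?thesis using True by simp
next
  case False
  then obtain i0 where i0: "i0 \<in> S" by auto
  define g where "g i = nat \<lfloor>(f i - a) / d\<rfloor>" for i
  have inj: "inj_on g S"
  proof (rule inj_onI, rule ccontr)
    fix i j assume ij: "i \<in> S" "j \<in> S" "g i = g j" "i \<noteq> j"
    have nn: "0 \<le> (f i - a) / d" "0 \<le> (f j - a) / d" using rng ij d by auto
    hence "\<lfloor>(f i - a) / d\<rfloor> = \<lfloor>(f j - a) / d\<rfloor>" using ij(3) unfolding g_def
      by (metis floor_less_zero nat_eq_iff2 nat_int not_le of_nat_nat)
    hence "\<bar>(f i - a) / d - (f j - a) / d\<bar> < 1"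
      using of_int_floor_le[of "(f i - a) / d"] of_int_floor_le[of "(f j - a) / d"]
        real_of_int_floor_add_one_gt[of "(f i - a) / d"] real_of_int_floor_add_one_gt[of "(f j - a) / d"]
      unfolding abs_less_iff by linarith
    hence "\<bar>f i - f j\<bar> / d < 1" using d by (simp add: diff_divide_distrib[symmetric])
    hence "\<bar>f i - f j\<bar> < d" using d by simp
    thus False using sep ij by force
  qed
  have sub: "g ` S \<subseteq> {0..nat \<lfloor>(b - a) / d\<rfloor>}"
  proof
    fix x assume "x \<in> g ` S"
    then obtain i where i: "i \<in> S" "x = g i" by auto
    have "(f i - a) / d \<le> (b - a) / d" using rng i d by (simp add: divide_right_mono)
    hence "\<lfloor>(f i - a) / d\<rfloor> \<le> \<lfloor>(b - a) / d\<rfloor>" by (rule floor_mono)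
    thus "x \<in> {0..nat \<lfloor>(b - a) / d\<rfloor>}" using i unfolding g_def by auto
  qed
  have "card S = card (g ` S)" using inj by (simp add: card_image)
  also have "\<dots> \<le> card {0..nat \<lfloor>(b - a) / d\<rfloor>}" using sub by (intro card_mono) auto
  also have "\<dots> = nat \<lfloor>(b - a) / d\<rfloor> + 1" by simp
  finally have "real (card S) \<le> real (nat \<lfloor>(b - a) / d\<rfloor>) + 1" by linarith
  also have "real (nat \<lfloor>(b - a) / d\<rfloor>) = of_int \<lfloor>(b - a) / d\<rfloor>"
    using ab d by simp
  also have "\<dots> \<le> (b - a) / d" by simp
  finally show ?thesis by simp
qed

lemma bernoulli_le: fixes t :: real assumes "t \<ge> 0" shows "1 + real k * t \<le> (1 + t)^k"
proof (induction k)
  case 0 then show ?case by simp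
next
  case (Suc k)
  have "1 + real (Suc k) * t \<le> (1 + real k * t) * (1 + t)" using assms
    by (simp add: algebra_simps)
  also have "\<dots> \<le> (1+t)^k * (1+t)" using Suc assms by (intro mult_right_mono) auto
  finally show ?case by (simp add: mult.commute)
qed

lemma level_ex: fixes q y :: real assumes "q > 1" "y \<ge> 1"
  shows "\<exists>k::nat. q^k \<le> y \<and> y < q^(Suc k)"
proof -
  define r where "r = ln y / ln q"
  have lq: "ln q > 0" using assms by simp
  have r0: "r \<ge> 0" unfolding r_def using assms lq by simp
  define k where "k = nat \<lfloor>r\<rfloor>"
  have k1: "real k \<le> r" "r < real k + 1" unfolding k_def using r0 by linarith+
  have pw: "q^m = exp (real m * ln q)" for m using assms
    by (simp add: powr_realpow[symmetric] powr_def)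
  have "real k * ln q \<le> ln y" using k1 lq unfolding r_def by (simp add: pos_le_divide_eq)
  hence "q^k \<le> y" unfolding pw using assms by (metis exp_le_cancel_iff exp_ln less_le_trans zero_less_one)
  moreover have "ln y < real (Suc k) * ln q" using k1 lq unfolding r_def by (simp add: pos_divide_less_eq add.commute)
  hence "y < q^(Suc k)" unfolding pw using assms by (metis exp_less_cancel_iff exp_ln less_le_trans zero_less_one)
  ultimately show ?thesis by blast
qed

lemma sq_lt: fixes a b :: real assumes "\<bar>a\<bar> < b" shows "a^2 < b^2"
  using power_strict_mono[of "\<bar>a\<bar>" b 2] assms by simp

lemma near_count:
  fixes X Y :: "'a \<Rightarrow> real"
  assumes fin: "finite I" and kap: "\<kappa> > 0" and rho: "\<rho> > 0"
    and sep: "\<forall>i\<in>I. \<forall>j\<in>I. i \<noteq> j \<longrightarrow> 2 * \<kappa> * Y i * Y j \<le> (X i - X j)^2 + (Y i - Y j)^2"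
    and rng: "\<forall>i\<in>I. 1 \<le> Y i \<and> Y i < \<rho> \<and> \<bar>X i\<bar> < \<rho>"
  shows "real (card I) \<le> (2 * (1 + sqrt \<kappa>) / (sqrt \<kappa>)^2 + 1 / sqrt \<kappa>) * \<rho> + 1"
proof -
  define t where "t = sqrt \<kappa>"
  have t: "t > 0" "t^2 = \<kappa>" using kap unfolding t_def by auto
  define q where "q = 1 + t"
  have q: "q > 1" using t unfolding q_def by simp
  define lev where "lev i = (SOME k::nat. q^k \<le> Y i \<and> Y i < q^(Suc k))" for i
  have lev: "q^(lev i) \<le> Y i \<and> Y i < q^(Suc (lev i))" if "i \<in> I" for i
    unfolding lev_def by (rule someI_ex) (use level_ex[OF q] rng that in auto)
  define K where "K = nat \<lceil>\<rho> / t\<rceil>"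
  define L where "L k = {i\<in>I. lev i = k}" for k
  have levK: "lev i < K" if "i \<in> I" for i
  proof -
    have "1 + real (lev i) * t \<le> q^(lev i)" unfolding q_def using t by (intro bernoulli_le) auto
    also have "\<dots> < \<rho>" using lev[OF that] rng that by force
    finally have "real (lev i) < \<rho> / t" using t by (simp add: pos_less_divide_eq)
    also have "\<dots> \<le> of_int \<lceil>\<rho> / t\<rceil>" by simp
    finally show ?thesis unfolding K_def by linarith
  qed
  have Ieq: "I = (\<Union>k\<in>{..<K}. L k)" unfolding L_def using levK by auto
  have cardL: "real (card (L k)) \<le> 2 * \<rho> / (t * q^k) + 1" for k
  proof -
    have "real (card (L k)) \<le> (\<rho> - (-\<rho>)) / (t * q^k) + 1"
    proof (rule pigeon1[where f = X])
      show "finite (L k)" using fin unfolding L_def by auto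
      show "- \<rho> \<le> \<rho>" using rho by simp
      show "\<forall>i\<in>L k. - \<rho> \<le> X i \<and> X i \<le> \<rho>" using rng unfolding L_def by force
      show "0 < t * q^k" using t q by simp
      show "\<forall>i\<in>L k. \<forall>j\<in>L k. i \<noteq> j \<longrightarrow> t * q ^ k \<le> \<bar>X i - X j\<bar>"
      proof (intro ballI impI, rule ccontr)
        fix i j assume ij: "i \<in> L k" "j \<in> L k" "i \<noteq> j" "\<not> t * q ^ k \<le> \<bar>X i - X j\<bar>"
        have iI: "i \<in> I" "j \<in> I" "lev i = k" "lev j = k" using ij unfolding L_def by auto
        have yi: "q^k \<le> Y i" "Y i < q^k * q" "q^k \<le> Y j" "Y j < q^k * q"
          using lev[OF iI(1)] lev[OF iI(2)] iI by (auto simp: mult.commute)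
        have dy: "\<bar>Y i - Y j\<bar> < t * q^k" using yi unfolding q_def by (auto simp: algebra_simps)
        have dx: "\<bar>X i - X j\<bar> < t * q^k" using ij(4) by simp
        have "(X i - X j)^2 < (t * q^k)^2" using dx by (rule sq_lt)
        moreover have "(Y i - Y j)^2 < (t * q^k)^2" using dy by (rule sq_lt)
        moreover have "(t * q^k)^2 = \<kappa> * (q^k * q^k)" using t by (simp add: power2_eq_square algebra_simps)
        moreover have "0 \<le> q^k" using q by simp
        hence "q^k * q^k \<le> Y i * Y j" using yi by (intro mult_mono) auto
        hence "\<kappa> * (q^k * q^k) \<le> \<kappa> * (Y i * Y j)" using kap by (intro mult_left_mono) auto
        moreover have "2 * \<kappa> * Y i * Y j = 2 * (\<kappa> * (Y i * Y j))" by simp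
        ultimately have "(X i - X j)^2 + (Y i - Y j)^2 < 2 * \<kappa> * Y i * Y j"
          by linarith
        moreover have "2 * \<kappa> * Y i * Y j \<le> (X i - X j)^2 + (Y i - Y j)^2"
          using sep iI(1,2) ij(3) by blast
        ultimately show False by linarith
      qed
    qed
    thus ?thesis by simp
  qed
  have "real (card I) \<le> real (\<Sum>k<K. card (L k))"
    unfolding Ieq by (simp only: of_nat_le_iff) (rule card_UN_le, simp)
  also have "\<dots> = (\<Sum>k<K. real (card (L k)))" by simp
  also have "\<dots> \<le> (\<Sum>k<K. 2 * \<rho> / (t * q^k) + 1)" by (intro sum_mono cardL)
  also have "\<dots> = (2 * \<rho> / t) * (\<Sum>k<K. (1/q)^k) + real K"
    by (simp add: sum.distrib sum_distrib_left power_one_over field_simps)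
  finally have c1: "real (card I) \<le> (2 * \<rho> / t) * (\<Sum>k<K. (1/q)^k) + real K" .
  have "(\<Sum>k<K. (1/q)^k) \<le> q / t"
  proof -
    have "1/q \<noteq> 1" using q by simp
    hence "(\<Sum>k<K. (1/q)^k) = (1 - (1/q)^K) / (1 - 1/q)" by (subst sum_gp_strict) (simp only: if_False)
    also have "\<dots> \<le> 1 / (1 - 1/q)" using q by (intro divide_right_mono) (auto simp: field_simps)
    also have "1 / (1 - 1/q) = q / t" unfolding q_def using t by (simp add: field_simps)
    finally show ?thesis .
  qed
  hence "(2 * \<rho> / t) * (\<Sum>k<K. (1/q)^k) \<le> (2 * \<rho> / t) * (q / t)" using rho t
    by (intro mult_left_mono) auto
  moreover have "real K \<le> \<rho> / t + 1"
  proof -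
    have "0 \<le> \<rho> / t" using rho t by simp
    hence "real K = of_int \<lceil>\<rho> / t\<rceil>" unfolding K_def by simp
    also have "\<dots> \<le> \<rho> / t + 1" by linarith
    finally show ?thesis .
  qed
  ultimately have "(2 * \<rho> / t) * (\<Sum>k<K. (1/q)^k) + real K \<le> (2 * \<rho> / t) * (q / t) + \<rho> / t + 1" by linarith
  also have "\<dots> = (2 * (1 + t) / t^2 + 1 / t) * \<rho> + 1" unfolding q_def using t
    by (simp add: field_simps power2_eq_square)
  finally have c2: "(2 * \<rho> / t) * (\<Sum>k<K. (1/q)^k) + real K \<le> (2 * (1 + t) / t^2 + 1 / t) * \<rho> + 1" .
  have "real (card I) \<le> (2 * (1 + t) / t^2 + 1 / t) * \<rho> + 1" using c1 c2 by (rule order_trans)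
  thus ?thesis by (simp only: t_def)
qed

definition NX :: "real^3 \<Rightarrow> real^3 \<Rightarrow> real" where "NX v u = (hX u - hX v) / hY v"
definition NY :: "real^3 \<Rightarrow> real^3 \<Rightarrow> real" where "NY v u = hY u / hY v"

lemma hY_pos: "u \<in> hyp_plane \<Longrightarrow> hY u > 0"
  unfolding hY_def using hp_pos by simp

lemma NY_pos: "v \<in> hyp_plane \<Longrightarrow> u \<in> hyp_plane \<Longrightarrow> NY v u > 0"
  unfolding NY_def using hY_pos by simp

lemma NXY_self: "v \<in> hyp_plane \<Longrightarrow> NX v v = 0 \<and> NY v v = 1"
  unfolding NX_def NY_def using hY_pos[of v] by simp

lemma dist_norm: assumes "v \<in> hyp_plane" "u \<in> hyp_plane" "w \<in> hyp_plane"
  shows "- mink u w = FF (NX v u) (NY v u) (NX v w) (NY v w)"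
  unfolding chart[OF assms(2,3)] NX_def NY_def
  using FF_norm[OF hY_pos[OF assms(1)] hY_pos[OF assms(2)] hY_pos[OF assms(3)]] by simp

lemma hangle_chart: assumes v: "v \<in> hyp_plane" and u: "u \<in> hyp_plane" and w: "w \<in> hyp_plane"
  shows "hangle v u w =
    arccos ((Qf (NX v u) (NY v u) * Qf (NX v w) (NY v w) + Rf (NX v u) (NY v u) * Rf (NX v w) (NY v w))
      / sqrt (((Qf (NX v u) (NY v u))^2 + (Rf (NX v u) (NY v u))^2) * ((Qf (NX v w) (NY v w))^2 + (Rf (NX v w) (NY v w))^2)))"
proof -
  have vv: "mink v v = -1" using v unfolding hyp_plane_def by simp
  have gen: "mink (htangent v a) (htangent v b) = Qf (NX v a) (NY v a) * Qf (NX v b) (NY v b) + Rf (NX v a) (NY v a) * Rf (NX v b) (NY v b)"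
    if a: "a \<in> hyp_plane" and b: "b \<in> hyp_plane" for a b
  proof -
    have "mink (htangent v a) (htangent v b) = mink a b + mink v a * mink v b" by (rule tangent_prod[OF vv])
    also have "\<dots> = - FF (NX v a) (NY v a) (NX v b) (NY v b) + FF 0 1 (NX v a) (NY v a) * FF 0 1 (NX v b) (NY v b)"
    proof -
      have e1: "mink a b = - FF (NX v a) (NY v a) (NX v b) (NY v b)" using dist_norm[OF v a b] by linarith
      have e2: "mink v a = - FF 0 1 (NX v a) (NY v a)" using dist_norm[OF v v a] NXY_self[OF v] by simp
      have e3: "mink v b = - FF 0 1 (NX v b) (NY v b)" using dist_norm[OF v v b] NXY_self[OF v] by simp
      show ?thesis unfolding e1 e2 e3 by simp
    qed
    also have "\<dots> = Qf (NX v a) (NY v a) * Qf (NX v b) (NY v b) + Rf (NX v a) (NY v a) * Rf (NX v b) (NY v b)"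
      by (rule QR_id) (use NY_pos v a b in auto)
    finally show ?thesis .
  qed
  show ?thesis unfolding hangle_def Let_def gen[OF u w] gen[OF u u] gen[OF w w]
    by (simp add: power2_eq_square)
qed

lemma far_s: fixes X Y \<rho> :: real
  assumes "Y \<ge> 1" "\<rho>^2 \<le> X^2 + Y^2" "\<rho> \<ge> 6"
  shows "Qf X Y > 0 \<and> \<bar>Rf X Y / sqrt ((Qf X Y)^2 + (Rf X Y)^2)\<bar> \<le> 4 / \<rho>"
proof -
  define m where "m = X^2 + Y^2"
  have "6 * 6 \<le> \<rho> * \<rho>" using assms by (intro mult_mono) auto
  hence m: "m \<ge> 36" using assms unfolding m_def by (simp add: power2_eq_square)
  have Q: "Qf X Y = (m - 1) / (2*Y)" unfolding Qf_def m_def ..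
  have Qp: "Qf X Y > 0" unfolding Q using m assms by simp
  have "sqrt ((Qf X Y)^2) \<le> sqrt ((Qf X Y)^2 + (Rf X Y)^2)" by (rule real_sqrt_le_mono) simp
  hence sq: "Qf X Y \<le> sqrt ((Qf X Y)^2 + (Rf X Y)^2)" using Qp by simp
  have "\<bar>Rf X Y / sqrt ((Qf X Y)^2 + (Rf X Y)^2)\<bar> = \<bar>Rf X Y\<bar> / sqrt ((Qf X Y)^2 + (Rf X Y)^2)"
    by (simp add: abs_divide)
  also have "\<dots> \<le> \<bar>Rf X Y\<bar> / Qf X Y" using sq Qp by (intro divide_left_mono) (auto intro!: mult_pos_pos add_pos_nonneg)
  also have "\<dots> = 2 * \<bar>X\<bar> / (m - 1)" unfolding Q Rf_def using assms m
    by (simp add: abs_divide field_simps)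
  also have "\<dots> \<le> 4 / \<rho>"
  proof -
    have "\<bar>X\<bar> * \<rho> \<le> (X^2 + \<rho>^2) / 2"
      using zero_le_power2[of "\<bar>X\<bar> - \<rho>"] by (simp add: power2_eq_square algebra_simps)
    also have "\<dots> \<le> m"
    proof -
      have "X^2 + \<rho>^2 \<le> 2 * m" using assms(2) unfolding m_def by (smt (verit) zero_le_power2)
      thus ?thesis by simp
    qed
    finally have h: "\<bar>X\<bar> * \<rho> \<le> m" .
    have "2 * \<bar>X\<bar> * \<rho> = 2 * (\<bar>X\<bar> * \<rho>)" by simp
    hence "2 * \<bar>X\<bar> * \<rho> \<le> 4 * m - 4" using m h by linarith
    thus ?thesis using m assms by (simp add: field_simps)
  qed
  finally show ?thesis using Qp by simp
qed

definition C1c :: "real \<Rightarrow> real" where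
  "C1c c = 2 * (1 + sqrt (cosh c - 1)) / (sqrt (cosh c - 1))^2 + 1 / sqrt (cosh c - 1)"
definition N0c :: "real \<Rightarrow> real" where "N0c c = 24 * C1c c + 5"
definition Aconst :: "real \<Rightarrow> real" where "Aconst c = 640 * C1c c + 2 * pi * (N0c c)^2"

lemma kappa_pos: "c > 0 \<Longrightarrow> cosh c - 1 > (0::real)"
  using cosh_real_strict_mono[of 0 c] by simp

lemma C1c_pos: assumes "c > 0" shows "C1c c > 0"
proof -
  have s: "sqrt (cosh c - 1) > 0" using kappa_pos[OF assms] by simp
  have "2 * (1 + sqrt (cosh c - 1)) > 0" by (intro mult_pos_pos add_pos_pos s) simp_all
  moreover have "(sqrt (cosh c - 1))^2 > 0" using s by (rule zero_less_power)
  ultimately have "2 * (1 + sqrt (cosh c - 1)) / (sqrt (cosh c - 1))^2 > 0" by (rule divide_pos_pos)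
  moreover have "1 / sqrt (cosh c - 1) > 0" using s by simp
  ultimately show ?thesis unfolding C1c_def by linarith
qed

lemma Aconst_pos: "c > 0 \<Longrightarrow> Aconst c > 0"
  unfolding Aconst_def using C1c_pos[of c] pi_gt_zero
  by (intro add_pos_nonneg) auto

lemma sep_from_vv:
  assumes c: "c > 0" and hd: "hdrawing n P" and vv: "c \<le> vv_res_Kn n P"
    and ij: "i < n" "j < n" "i \<noteq> j"
  shows "cosh c \<le> - mink (P i) (P j)"
proof -
  have hp: "P i \<in> hyp_plane" "P j \<in> hyp_plane" using hd ij unfolding hdrawing_def by auto
  define Sd where "Sd = {hdist (P i) (P j) | i j. i < n \<and> j < n \<and> i \<noteq> j}"
  have "Sd \<subseteq> (\<lambda>(i,j). hdist (P i) (P j)) ` ({..<n} \<times> {..<n})" unfolding Sd_def by auto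
  hence fin: "finite Sd" by (rule finite_subset) auto
  have mem: "hdist (P i) (P j) \<in> Sd" unfolding Sd_def using ij by auto
  have "c \<le> Min Sd" using vv unfolding vv_res_Kn_def Sd_def .
  also have "\<dots> \<le> hdist (P i) (P j)" using fin mem by (rule Min_le)
  finally have c1: "c \<le> arcosh (- mink (P i) (P j))" unfolding hdist_def .
  have D1: "- mink (P i) (P j) \<ge> 1" unfolding chart[OF hp]
    using FF_ge1 hY_pos hp by blast
  have "cosh c \<le> cosh (arcosh (- mink (P i) (P j)))"
    using c1 c D1 by (subst cosh_real_nonneg_le_iff) auto
  thus ?thesis using D1 by simp
qed

lemma arccos_le_pi_abs: "\<bar>t\<bar> \<le> 1 \<Longrightarrow> arccos t \<le> pi"
  by (rule arccos_ubound) (auto simp: abs_le_iff)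

lemma hangle_le_pi: assumes "v \<in> hyp_plane" "u \<in> hyp_plane" "w \<in> hyp_plane"
  shows "hangle v u w \<le> pi"
  unfolding hangle_chart[OF assms]
  using arg_range[of "Qf (NX v u) (NY v u)" "Qf (NX v w) (NY v w)" "Rf (NX v u) (NY v u)" "Rf (NX v w) (NY v w)"]
  by (intro arccos_le_pi_abs)

lemma main_bound:
  assumes c: "c > 0" and n: "n \<ge> 2" and hd: "hdrawing n P" and vv: "c \<le> vv_res_Kn n P"
  shows "ang_res_Kn n P \<le> Aconst c / (real n)^2"
proof -
  define \<kappa> where "\<kappa> = cosh c - 1"
  define C1 where "C1 = C1c c"
  define N0 where "N0 = N0c c"
  define A where "A = Aconst c"
  have kp: "\<kappa> > 0" unfolding \<kappa>_def using kappa_pos[OF c] .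
  have C1p: "C1 > 0" unfolding C1_def using C1c_pos[OF c] .
  have C1eq: "C1 = 2 * (1 + sqrt \<kappa>) / (sqrt \<kappa>)^2 + 1 / sqrt \<kappa>" unfolding C1_def C1c_def \<kappa>_def ..
  have N0eq: "N0 = 24 * C1 + 5" unfolding N0_def N0c_def C1_def ..
  have Aeq: "A = 640 * C1 + 2 * pi * N0^2" unfolding A_def Aconst_def C1_def N0_def ..
  have hp: "\<And>i. i < n \<Longrightarrow> P i \<in> hyp_plane" using hd unfolding hdrawing_def by auto
  define f where "f i = (P i)$1 - (P i)$2" for i
  have fpos: "\<And>i. i < n \<Longrightarrow> f i > 0" unfolding f_def using hp hp_pos by blast
  obtain i0 where i0: "i0 < n" "\<And>i. i < n \<Longrightarrow> f i \<le> f i0"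
  proof -
    have "f 0 \<in> f ` {..<n}" using n by simp
    hence fin: "finite (f ` {..<n})" "f ` {..<n} \<noteq> {}" by auto
    hence "Max (f ` {..<n}) \<in> f ` {..<n}" by (rule Max_in)
    then obtain j where j: "j < n" "f j = Max (f ` {..<n})" by auto
    have "f i \<le> f j" if "i < n" for i unfolding j(2) using that fin by (intro Max_ge) auto
    thus ?thesis using that j(1) by blast
  qed
  define v where "v = P i0"
  have vh: "v \<in> hyp_plane" using hp i0 unfolding v_def by auto
  define X where "X i = NX v (P i)" for i
  define Y where "Y i = NY v (P i)" for i
  have Y1: "1 \<le> Y i" if "i < n" for i
  proof -
    have "Y i = (1 / f i) / (1 / f i0)" unfolding Y_def NY_def hY_def f_def v_def ..
    also have "\<dots> = f i0 / f i" using fpos i0(1) that by simp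
    finally show ?thesis using fpos[OF that] i0(2)[OF that] by simp
  qed
  have Ypos: "Y i > 0" if "i < n" for i using Y1[OF that] by linarith
  have XY0: "X i0 = 0" "Y i0 = 1" using NXY_self[OF vh] unfolding X_def Y_def v_def by auto
  have dist: "- mink (P i) (P j) = FF (X i) (Y i) (X j) (Y j)" if "i < n" "j < n" for i j
    using dist_norm[OF vh hp[OF that(1)] hp[OF that(2)]] unfolding X_def Y_def .
  have sepXY: "2 * \<kappa> * Y i * Y j \<le> (X i - X j)^2 + (Y i - Y j)^2" if ij: "i < n" "j < n" "i \<noteq> j" for i j
  proof -
    have "1 + \<kappa> \<le> FF (X i) (Y i) (X j) (Y j)"
      using sep_from_vv[OF c hd vv ij] dist[OF ij(1,2)] unfolding \<kappa>_def by simp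
    hence "\<kappa> \<le> ((X i - X j)^2 + (Y i - Y j)^2) / (2 * Y i * Y j)" unfolding FF_def by simp
    moreover have "2 * Y i * Y j > 0" using Ypos ij by simp
    ultimately have "\<kappa> * (2 * Y i * Y j) \<le> (X i - X j)^2 + (Y i - Y j)^2" by (simp add: pos_le_divide_eq)
    thus ?thesis by (simp add: ac_simps)
  qed
  define Q where "Q i = Qf (X i) (Y i)" for i
  define R where "R i = Rf (X i) (Y i)" for i
  define s where "s i = R i / sqrt ((Q i)^2 + (R i)^2)" for i
  have hang: "hangle v (P i) (P j) = arccos ((Q i * Q j + R i * R j) / sqrt (((Q i)^2 + (R i)^2) * ((Q j)^2 + (R j)^2)))"
    if "i < n" "j < n" for i j
    using hangle_chart[OF vh hp[OF that(1)] hp[OF that(2)]] unfolding Q_def R_def X_def Y_def .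
  define S where "S = {hangle (P a) (P b) (P d) | a b d. a < n \<and> b < n \<and> d < n \<and> b \<noteq> a \<and> d \<noteq> a \<and> b \<noteq> d}"
  have res_def: "ang_res_Kn n P = (if S = {} then 2 * pi else Min S)" unfolding ang_res_Kn_def S_def Let_def ..
  have "S \<subseteq> (\<lambda>(a,b,d). hangle (P a) (P b) (P d)) ` ({..<n} \<times> {..<n} \<times> {..<n})" unfolding S_def by force
  hence finS: "finite S" by (rule finite_subset) auto
  have res_le: "ang_res_Kn n P \<le> x" if "x \<in> S" for x
    using that res_def finS Min_le by auto
  have res_2pi: "ang_res_Kn n P \<le> 2 * pi"
  proof (cases "S = {}")
    case True thus ?thesis using res_def by simp
  next
    case False
    hence "Min S \<in> S" using finS by (intro Min_in) auto
    then obtain a b d where abd: "a < n" "b < n" "d < n" "Min S = hangle (P a) (P b) (P d)" unfolding S_def by blast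
    have "Min S \<le> pi" unfolding abd(4) using hangle_le_pi hp abd by blast
    moreover have "ang_res_Kn n P = Min S" using res_def False by simp
    ultimately show ?thesis using pi_gt_zero by linarith
  qed
  show ?thesis
  proof (rule ccontr)
    assume "\<not> ?thesis"
    hence big: "A / (real n)^2 < ang_res_Kn n P" unfolding A_def by simp
    have npos: "(real n)^2 > 0" using n by simp
    have nN0: "real n > N0"
    proof (rule ccontr)
      assume "\<not> real n > N0"
      hence "real n \<le> N0" by simp
      hence "(real n)^2 \<le> N0^2" using n by (intro power_mono) auto
      hence "2 * pi * (real n)^2 \<le> 2 * pi * N0^2" by simp
      also have "\<dots> \<le> A" unfolding Aeq using C1p by simp
      finally have "2 * pi \<le> A / (real n)^2" using npos by (simp add: pos_le_divide_eq)
      thus False using big res_2pi by linarith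
    qed
    define \<rho> where "\<rho> = real n / (4 * C1)"
    have rho6: "\<rho> \<ge> 6" unfolding \<rho>_def using nN0 C1p N0eq by (simp add: pos_le_divide_eq)
    have rhop: "\<rho> > 0" using rho6 by simp
    have C1rho: "C1 * \<rho> = real n / 4" unfolding \<rho>_def using C1p by simp
    define Nr where "Nr = {i\<in>{..<n}. (X i)^2 + (Y i)^2 < \<rho>^2}"
    define Fr where "Fr = {i\<in>{..<n}. \<rho>^2 \<le> (X i)^2 + (Y i)^2}"
    have un: "{..<n} = Nr \<union> Fr" "Nr \<inter> Fr = {}" unfolding Nr_def Fr_def by auto
    have fNF: "finite Nr" "finite Fr" unfolding Nr_def Fr_def by auto
    have "card (Nr \<union> Fr) = card Nr + card Fr" using fNF un(2) by (rule card_Un_disjoint)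
    moreover have "card (Nr \<union> Fr) = n" unfolding un(1)[symmetric] by simp
    ultimately have cardn: "n = card Nr + card Fr" by simp
    have cN: "real (card Nr) \<le> C1 * \<rho> + 1"
    proof -
      have "real (card Nr) \<le> (2 * (1 + sqrt \<kappa>) / (sqrt \<kappa>)^2 + 1 / sqrt \<kappa>) * \<rho> + 1"
      proof (rule near_count)
        show "finite Nr" unfolding Nr_def by simp
        show "0 < \<kappa>" by (rule kp)
        show "0 < \<rho>" by (rule rhop)
        show "\<forall>i\<in>Nr. \<forall>j\<in>Nr. i \<noteq> j \<longrightarrow> 2 * \<kappa> * Y i * Y j \<le> (X i - X j)^2 + (Y i - Y j)^2"
          using sepXY unfolding Nr_def by blast
        show "\<forall>i\<in>Nr. 1 \<le> Y i \<and> Y i < \<rho> \<and> \<bar>X i\<bar> < \<rho>"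
        proof
          fix i assume i: "i \<in> Nr"
          hence il: "i < n" and lt: "(X i)^2 + (Y i)^2 < \<rho>^2" unfolding Nr_def by auto
          have "(Y i)^2 < \<rho>^2" using lt zero_le_power2[of "X i"] by linarith
          hence "Y i < \<rho>" using power_less_imp_less_base[of "Y i" 2 \<rho>] rhop by simp
          moreover have "(X i)^2 < \<rho>^2" using lt zero_le_power2[of "Y i"] by linarith
          hence "\<bar>X i\<bar>^2 < \<rho>^2" by simp
          hence "\<bar>X i\<bar> < \<rho>" using power_less_imp_less_base[of "\<bar>X i\<bar>" 2 \<rho>] rhop by simp
          ultimately show "1 \<le> Y i \<and> Y i < \<rho> \<and> \<bar>X i\<bar> < \<rho>" using Y1[OF il] by simp
        qed
      qed
      thus ?thesis unfolding C1eq .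
    qed
    have i0N: "i0 \<notin> Fr"
    proof
      assume "i0 \<in> Fr"
      hence "\<rho>^2 \<le> 1" unfolding Fr_def using XY0 by simp
      moreover have "6 * 6 \<le> \<rho> * \<rho>" using rho6 by (intro mult_mono) auto
      ultimately show False by (simp add: power2_eq_square)
    qed
    have farp: "Q i > 0 \<and> \<bar>s i\<bar> \<le> 4 / \<rho>" if "i \<in> Fr" for i
      using far_s[of "Y i" \<rho> "X i"] that Y1 rho6 unfolding Fr_def Q_def s_def R_def by auto
    have s2: "(s i)^2 \<le> 1/2" if "i \<in> Fr" for i
    proof -
      have "4 / \<rho> \<le> 4 / 6" using rho6 by (intro divide_left_mono) auto
      hence "\<bar>s i\<bar> \<le> 2/3" using farp[OF that] by simp
      hence "\<bar>s i\<bar>^2 \<le> (2/3)^2" by (intro power_mono) auto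
      thus ?thesis by (simp add: power2_eq_square)
    qed
    define d where "d = A / (5 * (real n)^2)"
    have dp: "d > 0" unfolding d_def using Aconst_pos[OF c] npos unfolding A_def by simp
    have pair: "d \<le> \<bar>s i - s j\<bar>" if ij: "i \<in> Fr" "j \<in> Fr" "i \<noteq> j" for i j
    proof -
      have il: "i < n" "j < n" using ij unfolding Fr_def by auto
      have ne: "i \<noteq> i0" "j \<noteq> i0" using ij i0N by auto
      have "hangle (P i0) (P i) (P j) \<in> S" unfolding S_def using il ne ij(3) i0(1) by blast
      hence "ang_res_Kn n P \<le> hangle v (P i) (P j)" unfolding v_def by (rule res_le)
      also have "\<dots> \<le> 5 * \<bar>s i - s j\<bar>" unfolding hang[OF il] s_def
        by (rule angle_bound) (use farp[OF ij(1)] farp[OF ij(2)] s2[OF ij(1)] s2[OF ij(2)] in \<open>auto simp: s_def\<close>)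
      finally have "A / (real n)^2 < 5 * \<bar>s i - s j\<bar>" using big by linarith
      thus ?thesis unfolding d_def using npos by (simp add: field_simps)
    qed
    have cF: "real (card Fr) \<le> (4/\<rho> - (-(4/\<rho>))) / d + 1"
    proof (rule pigeon1[where f = s])
      show "finite Fr" unfolding Fr_def by simp
      show "- (4 / \<rho>) \<le> 4 / \<rho>" using rhop by simp
      show "\<forall>i\<in>Fr. - (4 / \<rho>) \<le> s i \<and> s i \<le> 4 / \<rho>"
      proof
        fix i assume "i \<in> Fr"
        hence "\<bar>s i\<bar> \<le> 4 / \<rho>" using farp by blast
        thus "- (4 / \<rho>) \<le> s i \<and> s i \<le> 4 / \<rho>" by linarith
      qed
      show "\<forall>i\<in>Fr. \<forall>j\<in>Fr. i \<noteq> j \<longrightarrow> d \<le> \<bar>s i - s j\<bar>" using pair by blast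
      show "0 < d" by (rule dp)
    qed
    have "(4/\<rho> - (-(4/\<rho>))) / d = 160 * C1 * real n / A"
      unfolding d_def \<rho>_def using C1p npos Aconst_pos[OF c] n unfolding A_def by (simp add: field_simps power2_eq_square)
    also have "\<dots> \<le> real n / 4"
    proof -
      have Ap: "A > 0" unfolding A_def using Aconst_pos[OF c] .
      have "640 * C1 \<le> A" unfolding Aeq by simp
      hence "160 * C1 * real n * 4 \<le> real n * A" using n by (simp add: mult_left_mono)
      thus ?thesis using Ap by (simp add: field_simps)
    qed
    finally have cF2: "real (card Fr) \<le> real n / 4 + 1" using cF by linarith
    have "real n = real (card Nr) + real (card Fr)" using cardn by simp
    also have "\<dots> \<le> real n / 2 + 2" using cN C1rho cF2 by linarith
    finally have "real n \<le> 4" by linarith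
    thus False using nN0 N0eq C1p by linarith
  qed
qed

theorem theorem6:
  fixes c :: real
  assumes "c > 0"
  shows "\<exists>A>0. \<forall>n\<ge>2. \<forall>P. hdrawing n P \<and> vv_res_Kn n P \<ge> c
            \<longrightarrow> ang_res_Kn n P \<le> A / (real n)^2"
  using Aconst_pos[OF assms] main_bound[OF assms] by blast

end
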